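(* Consider the closed-loop battery recycling model described in the context, and assume the data satisfy: the demands $d$, supplies $s$, costs $c$, values $v$, probabilities $p$ and material coefficients $\Delta$ are nonnegative, $u^{\mathrm{REC}}>0$, $u^{\mathrm{CP}}>0$, $\gamma\in[0,1)$, and every facility cost function $f$ is concave and monotonically increasing on $[0,\infty)$ with $f(0)=0$. Let $\overline{y}=(\overline{y}^{\mathrm{REC}},\overline{y}^{\mathrm{CP}})\geq 0$ satisfy the capacity-monotonicity constraints (Cap3), (Cap4) and the upper bounds (Cap5), (Cap6). Then there exists $x\geq 0$ such that $(\overline{y},x)$ satisfies all of the production constraints (Prod1)–(Prod5), the inventory constraints (Inv1)–(Inv4), and the capacity constraints (Cap1)–(Cap6); i.e. $\{(y,x)\geq 0 : (\mathrm{Prod}),(\mathrm{Inv}),(\mathrm{Cap}),\ y=\overline{y}\}\neq\emptyset$.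
   Context: Index sets (all finite): battery chemistries $\mathcal{I}$; recycling processes $\mathcal{J}$; materials $\mathcal{K}$ with a subset of cathode powders $\mathcal{K}^{\mathrm{CP}}\subseteq\mathcal{K}$; zones $\mathcal{Z}$; time periods $\mathcal{T}=\{1,\dots,T\}$; planning periods $\mathcal{L}=\{1,\dots,L\}$, where $\{\mathcal{T}_l\}_{l\in\mathcal{L}}$ is a partition of $\mathcal{T}$; stages $\mathcal{S}=\{1,\dots,S\}$, with $\sigma_t\in\mathcal{S}$ the stage of period $t\in\mathcal{T}\cup\{0\}$. For each stage $\sigma$, $\Omega_\sigma$ is a finite nonempty set of scenario-tree nodes. For each node $\omega$ there is an ancestor map $a_\omega$ assigning to each $t\in\mathcal{T}\cup\{0\}$ a node $a_\omega(t)\in\Omega_{\sigma_t}$, with $a_\omega(t)=\omega$ whenever $\omega\in\Omega_{\sigma_t}$. For each $l\in\mathcal{L}$ there is a positive integer $N^{\mathrm{REC}}_l$ with $\mathcal{N}^{\mathrm{REC}}_l=\{1,\dots,N^{\mathrm{REC}}_l\}$, and for each $l\in\mathcal{L},k\in\mathcal{K}^{\mathrm{CP}}$ a positive integer $N^{\mathrm{CP}}_{l,k}$ with $\mathcal{N}^{\mathrm{CP}}_{l,k}=\{1,\dots,N^{\mathrm{CP}}_{l,k}\}$. Data: $\Delta^{\mathrm{NB}}_{i,k}$ ($i\in\mathcal{I},k\in\mathcal{K}$), $\Delta^{\mathrm{CP}}_{k',k}$ ($k'\in\mathcal{K}^{\mathrm{CP}},k\in\mathcal{K}\setminus\mathcal{K}^{\mathrm{CP}}$),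 $\Delta^{\mathrm{MC}}_{k',k}$ ($k',k\in\mathcal{K}\setminus\mathcal{K}^{\mathrm{CP}}$), $\Delta^{\mathrm{REC}}_{k,i,j}$ ($k\in\mathcal{K},i\in\mathcal{I},j\in\mathcal{J}$); demand $d_{\omega,z,t,i}$ and retired-battery supply $s_{\omega,z,t,i}$ for $t\in\mathcal{T}$, $\omega\in\Omega_{\sigma_t}$; maximum capacities $u^{\mathrm{REC}},u^{\mathrm{CP}}$. Operational variables (indexed by $t\in\mathcal{T}$, $z\in\mathcal{Z}$, $\omega\in\Omega_{\sigma_t}$, plus $t=0$ for inventories): $x^{\mathrm{NM,NB}}_{\omega,z,t,k},x^{\mathrm{RM,INV}}_{\omega,z,t,k},x^{\mathrm{RM,S}}_{\omega,z,t,k},x^{\mathrm{INV}}_{\omega,z,t,k}$ ($k\in\mathcal{K}$); $x^{\mathrm{INV,NB}}_{\omega,z,t,k},x^{\mathrm{CP,INV}}_{\omega,z,t,k}$ ($k\in\mathcal{K}^{\mathrm{CP}}$); $x^{\mathrm{NM,CP}}_{\omega,z,t,k},x^{\mathrm{MC,CP}}_{\omega,z,t,k},x^{\mathrm{INV,MC}}_{\omega,z,t,k}$ ($k\in\mathcal{K}\setminus\mathcal{K}^{\mathrm{CP}}$); $x^{\mathrm{RB}}_{\omega,z,t,i}$ ($i\in\mathcal{I}$); $x^{\mathrm{RB,RM}}_{\omega,z,t,i,j}$; transports $x^{\mathrm{TR,RM}}_{\omega,z,z',t,k}$ and $x^{\mathrm{TR,RB}}_{\omega,z,z',t,i}$ for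 $z'\neq z$. Capacity variables: $y^{\mathrm{REC}}_{z,l,j,n}$ ($n\in\mathcal{N}^{\mathrm{REC}}_l$) and $y^{\mathrm{CP}}_{z,l,k,n}$ ($k\in\mathcal{K}^{\mathrm{CP}}$, $n\in\mathcal{N}^{\mathrm{CP}}_{l,k}$). Production constraints, for all $t\in\mathcal{T},z\in\mathcal{Z},\omega\in\Omega_{\sigma_t}$: (Prod1) $\sum_{i}\Delta^{\mathrm{NB}}_{i,k}d_{\omega,z,t,i}=x^{\mathrm{NM,NB}}_{\omega,z,t,k}+x^{\mathrm{INV,NB}}_{\omega,z,t,k}$ for $k\in\mathcal{K}^{\mathrm{CP}}$; (Prod2) $\sum_{i}\Delta^{\mathrm{NB}}_{i,k}d_{\omega,z,t,i}=x^{\mathrm{NM,NB}}_{\omega,z,t,k}$ for $k\in\mathcal{K}\setminus\mathcal{K}^{\mathrm{CP}}$; (Prod3) $\sum_{k'\in\mathcal{K}^{\mathrm{CP}}}\Delta^{\mathrm{CP}}_{k',k}x^{\mathrm{CP,INV}}_{\omega,z,t,k'}=x^{\mathrm{NM,CP}}_{\omega,z,t,k}+x^{\mathrm{MC,CP}}_{\omega,z,t,k}$ for $k\in\mathcal{K}\setminus\mathcal{K}^{\mathrm{CP}}$; (Prod4) $\sum_{k'\in\mathcal{K}\setminus\mathcal{K}^{\mathrm{CP}}}\Delta^{\mathrm{MC}}_{k',k}x^{\mathrm{MC,CP}}_{\omega,z,t,k'}=x^{\mathrm{INV,MC}}_{\omega,z,t,k}$ for $k\in\mathcal{K}\setminus\mathcal{K}^{\mathrm{CP}}$;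 (Prod5) $x^{\mathrm{RM,INV}}_{\omega,z,t,k}+x^{\mathrm{RM,S}}_{\omega,z,t,k}=\sum_{i,j}\Delta^{\mathrm{REC}}_{k,i,j}x^{\mathrm{RB,RM}}_{\omega,z,t,i,j}$ for $k\in\mathcal{K}$. Inventory constraints: (Inv1) $x^{\mathrm{RB}}_{\omega,z,0,i}=0$ and (Inv2) $x^{\mathrm{INV}}_{\omega,z,0,k}=0$ for all $\omega\in\Omega_{\sigma_0}$; and for all $t\in\mathcal{T},z,\omega\in\Omega_{\sigma_t}$, with $\omega'=a_\omega(t-1)$: (Inv3) $x^{\mathrm{RB}}_{\omega,z,t,i}=x^{\mathrm{RB}}_{\omega',z,t-1,i}+\sum_{z'\neq z}(x^{\mathrm{TR,RB}}_{\omega,z',z,t,i}-x^{\mathrm{TR,RB}}_{\omega,z,z',t,i})+s_{\omega,z,t,i}-\sum_{j}x^{\mathrm{RB,RM}}_{\omega,z,t,i,j}$; (Inv4) for $k\in\mathcal{K}\setminus\mathcal{K}^{\mathrm{CP}}$: $x^{\mathrm{INV}}_{\omega,z,t,k}=x^{\mathrm{INV}}_{\omega',z,t-1,k}+\sum_{z'\neq z}(x^{\mathrm{TR,RM}}_{\omega,z',z,t,k}-x^{\mathrm{TR,RM}}_{\omega,z,z',t,k})+x^{\mathrm{RM,INV}}_{\omega,z,t,k}-x^{\mathrm{INV,MC}}_{\omega,z,t,k}$, and for $k\in\mathcal{K}^{\mathrm{CP}}$: $x^{\mathrm{INV}}_{\omega,z,t,k}=x^{\mathrm{INV}}_{\omega',z,t-1,k}+\sum_{z'\neq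 z}(x^{\mathrm{TR,RM}}_{\omega,z',z,t,k}-x^{\mathrm{TR,RM}}_{\omega,z,z',t,k})+x^{\mathrm{RM,INV}}_{\omega,z,t,k}+x^{\mathrm{CP,INV}}_{\omega,z,t,k}-x^{\mathrm{INV,NB}}_{\omega,z,t,k}$. Capacity constraints: (Cap1) $\sum_{n\in\mathcal{N}^{\mathrm{REC}}_l}y^{\mathrm{REC}}_{z,l,j,n}\geq\sum_i x^{\mathrm{RB,RM}}_{\omega,z,t,i,j}$ for all $j,l,t\in\mathcal{T}_l,z,\omega\in\Omega_{\sigma_t}$; (Cap2) $\sum_{n\in\mathcal{N}^{\mathrm{CP}}_{l,k}}y^{\mathrm{CP}}_{z,l,k,n}\geq x^{\mathrm{CP,INV}}_{\omega,z,t,k}$ for all $k\in\mathcal{K}^{\mathrm{CP}},l,t\in\mathcal{T}_l,z,\omega\in\Omega_{\sigma_t}$; (Cap3) $\sum_{n\in\mathcal{N}^{\mathrm{REC}}_l}y^{\mathrm{REC}}_{z,l,j,n}\geq\sum_{n\in\mathcal{N}^{\mathrm{REC}}_{l-1}}y^{\mathrm{REC}}_{z,l-1,j,n}$ for $l\geq2$; (Cap4) $\sum_{n\in\mathcal{N}^{\mathrm{CP}}_{l,k}}y^{\mathrm{CP}}_{z,l,k,n}\geq\sum_{n\in\mathcal{N}^{\mathrm{CP}}_{l-1,k}}y^{\mathrm{CP}}_{z,l-1,k,n}$ for $l\geq2$; (Cap5) $y^{\mathrm{REC}}_{z,l,j,n}\leq u^{\mathrm{REC}}$; (Cap6) $y^{\mathrm{CP}}_{z,l,k,n}\leq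 u^{\mathrm{CP}}$. *)

theory Defs
  imports "HOL-Analysis.Analysis"
begin

text \<open>Index types: 'i chemistries, 'j recycling processes, 'k materials,
  'z zones, 'w scenario-tree nodes. Time periods, planning periods, stages
  and facility indices are natural numbers.\<close>

record ('i, 'j, 'k, 'z, 'w) model =
  Ichem  :: "'i set"
  Jproc  :: "'j set"
  Kmat   :: "'k set"
  KCP    :: "'k set"                 \<comment> \<open>cathode powders\<close>
  Zones  :: "'z set"
  Tn     :: nat
  Ln     :: nat
  Tl     :: "nat \<Rightarrow> nat set"
  Sn     :: nat
  sig    :: "nat \<Rightarrow> nat"            \<comment> \<open>stage sigma_t of period t\<close>
  Om     :: "nat \<Rightarrow> 'w set"
  anc    :: "'w \<Rightarrow> nat \<Rightarrow> 'w"
  NREC   :: "nat \<Rightarrow> nat"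
  NCP    :: "nat \<Rightarrow> 'k \<Rightarrow> nat"
  DNB    :: "'i \<Rightarrow> 'k \<Rightarrow> real"
  DCP    :: "'k \<Rightarrow> 'k \<Rightarrow> real"
  DMC    :: "'k \<Rightarrow> 'k \<Rightarrow> real"
  DREC   :: "'k \<Rightarrow> 'i \<Rightarrow> 'j \<Rightarrow> real"
  dem    :: "'w \<Rightarrow> 'z \<Rightarrow> nat \<Rightarrow> 'i \<Rightarrow> real"
  supp   :: "'w \<Rightarrow> 'z \<Rightarrow> nat \<Rightarrow> 'i \<Rightarrow> real"
  uREC   :: real
  uCP    :: real

definition wf_model :: "('i, 'j, 'k, 'z, 'w) model \<Rightarrow> bool" where
  "wf_model M \<longleftrightarrow>
     finite (Ichem M) \<and> finite (Jproc M) \<and> finite (Kmat M) \<and> finite (Zones M) \<and>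
     KCP M \<subseteq> Kmat M \<and>
     \<comment> \<open>{T_l} is a partition of {1..T}\<close>
     (\<Union>l\<in>{1..Ln M}. Tl M l) = {1..Tn M} \<and>
     (\<forall>l\<in>{1..Ln M}. Tl M l \<noteq> {}) \<and>
     (\<forall>l\<in>{1..Ln M}. \<forall>l'\<in>{1..Ln M}. l \<noteq> l' \<longrightarrow> Tl M l \<inter> Tl M l' = {}) \<and>
     \<comment> \<open>stages\<close>
     (\<forall>t\<in>{0..Tn M}. sig M t \<in> {1..Sn M}) \<and>
     (\<forall>\<sigma>\<in>{1..Sn M}. finite (Om M \<sigma>) \<and> Om M \<sigma> \<noteq> {}) \<and>
     \<comment> \<open>ancestor maps\<close>
     (\<forall>\<sigma>\<in>{1..Sn M}. \<forall>\<omega>\<in>Om M \<sigma>. \<forall>t\<in>{0..Tn M}.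
         anc M \<omega> t \<in> Om M (sig M t) \<and> (\<omega> \<in> Om M (sig M t) \<longrightarrow> anc M \<omega> t = \<omega>)) \<and>
     \<comment> \<open>positive numbers of facility slots\<close>
     (\<forall>l\<in>{1..Ln M}. NREC M l > 0) \<and>
     (\<forall>l\<in>{1..Ln M}. \<forall>k\<in>KCP M. NCP M l k > 0)"

record ('i, 'j, 'k, 'z, 'w) opvars =
  xNMNB   :: "'w \<Rightarrow> 'z \<Rightarrow> nat \<Rightarrow> 'k \<Rightarrow> real"
  xRMINV  :: "'w \<Rightarrow> 'z \<Rightarrow> nat \<Rightarrow> 'k \<Rightarrow> real"
  xRMS    :: "'w \<Rightarrow> 'z \<Rightarrow> nat \<Rightarrow> 'k \<Rightarrow> real"
  xINV    :: "'w \<Rightarrow> 'z \<Rightarrow> nat \<Rightarrow> 'k \<Rightarrow> real"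
  xINVNB  :: "'w \<Rightarrow> 'z \<Rightarrow> nat \<Rightarrow> 'k \<Rightarrow> real"
  xCPINV  :: "'w \<Rightarrow> 'z \<Rightarrow> nat \<Rightarrow> 'k \<Rightarrow> real"
  xNMCP   :: "'w \<Rightarrow> 'z \<Rightarrow> nat \<Rightarrow> 'k \<Rightarrow> real"
  xMCCP   :: "'w \<Rightarrow> 'z \<Rightarrow> nat \<Rightarrow> 'k \<Rightarrow> real"
  xINVMC  :: "'w \<Rightarrow> 'z \<Rightarrow> nat \<Rightarrow> 'k \<Rightarrow> real"
  xRB     :: "'w \<Rightarrow> 'z \<Rightarrow> nat \<Rightarrow> 'i \<Rightarrow> real"
  xRBRM   :: "'w \<Rightarrow> 'z \<Rightarrow> nat \<Rightarrow> 'i \<Rightarrow> 'j \<Rightarrow> real"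
  xTRRM   :: "'w \<Rightarrow> 'z \<Rightarrow> 'z \<Rightarrow> nat \<Rightarrow> 'k \<Rightarrow> real"
  xTRRB   :: "'w \<Rightarrow> 'z \<Rightarrow> 'z \<Rightarrow> nat \<Rightarrow> 'i \<Rightarrow> real"

definition opvars_nonneg :: "('i, 'j, 'k, 'z, 'w) opvars \<Rightarrow> bool" where
  "opvars_nonneg x \<longleftrightarrow>
     (\<forall>\<omega> z t k. xNMNB x \<omega> z t k \<ge> 0 \<and> xRMINV x \<omega> z t k \<ge> 0 \<and> xRMS x \<omega> z t k \<ge> 0 \<and>
                 xINV x \<omega> z t k \<ge> 0 \<and> xINVNB x \<omega> z t k \<ge> 0 \<and> xCPINV x \<omega> z t k \<ge> 0 \<and>
                 xNMCP x \<omega> z t k \<ge> 0 \<and> xMCCP x \<omega> z t k \<ge> 0 \<and> xINVMC x \<omega> z t k \<ge> 0) \<and>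
     (\<forall>\<omega> z t i. xRB x \<omega> z t i \<ge> 0) \<and>
     (\<forall>\<omega> z t i j. xRBRM x \<omega> z t i j \<ge> 0) \<and>
     (\<forall>\<omega> z z' t k. xTRRM x \<omega> z z' t k \<ge> 0) \<and>
     (\<forall>\<omega> z z' t i. xTRRB x \<omega> z z' t i \<ge> 0)"

definition prod_constraints ::
  "('i, 'j, 'k, 'z, 'w) model \<Rightarrow> ('i, 'j, 'k, 'z, 'w) opvars \<Rightarrow> bool" where
  "prod_constraints M x \<longleftrightarrow>
    (\<forall>t\<in>{1..Tn M}. \<forall>z\<in>Zones M. \<forall>\<omega>\<in>Om M (sig M t).
      \<comment> \<open>(Prod1)\<close>
      (\<forall>k\<in>KCP M. (\<Sum>i\<in>Ichem M. DNB M i k * dem M \<omega> z t i)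
                    = xNMNB x \<omega> z t k + xINVNB x \<omega> z t k) \<and>
      \<comment> \<open>(Prod2)\<close>
      (\<forall>k\<in>Kmat M - KCP M. (\<Sum>i\<in>Ichem M. DNB M i k * dem M \<omega> z t i) = xNMNB x \<omega> z t k) \<and>
      \<comment> \<open>(Prod3)\<close>
      (\<forall>k\<in>Kmat M - KCP M. (\<Sum>k'\<in>KCP M. DCP M k' k * xCPINV x \<omega> z t k')
                    = xNMCP x \<omega> z t k + xMCCP x \<omega> z t k) \<and>
      \<comment> \<open>(Prod4)\<close>
      (\<forall>k\<in>Kmat M - KCP M. (\<Sum>k'\<in>Kmat M - KCP M. DMC M k' k * xMCCP x \<omega> z t k')
                    = xINVMC x \<omega> z t k) \<and>
      \<comment> \<open>(Prod5)\<close>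
      (\<forall>k\<in>Kmat M. xRMINV x \<omega> z t k + xRMS x \<omega> z t k
                    = (\<Sum>i\<in>Ichem M. \<Sum>j\<in>Jproc M. DREC M k i j * xRBRM x \<omega> z t i j)))"

definition inv_constraints ::
  "('i, 'j, 'k, 'z, 'w) model \<Rightarrow> ('i, 'j, 'k, 'z, 'w) opvars \<Rightarrow> bool" where
  "inv_constraints M x \<longleftrightarrow>
    \<comment> \<open>(Inv1), (Inv2)\<close>
    (\<forall>z\<in>Zones M. \<forall>\<omega>\<in>Om M (sig M 0).
       (\<forall>i\<in>Ichem M. xRB x \<omega> z 0 i = 0) \<and> (\<forall>k\<in>Kmat M. xINV x \<omega> z 0 k = 0)) \<and>
    (\<forall>t\<in>{1..Tn M}. \<forall>z\<in>Zones M. \<forall>\<omega>\<in>Om M (sig M t).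
      let \<omega>' = anc M \<omega> (t - 1) in
      \<comment> \<open>(Inv3)\<close>
      (\<forall>i\<in>Ichem M. xRB x \<omega> z t i =
          xRB x \<omega>' z (t - 1) i
          + (\<Sum>z'\<in>Zones M - {z}. xTRRB x \<omega> z' z t i - xTRRB x \<omega> z z' t i)
          + supp M \<omega> z t i - (\<Sum>j\<in>Jproc M. xRBRM x \<omega> z t i j)) \<and>
      \<comment> \<open>(Inv4), non-cathode-powder materials\<close>
      (\<forall>k\<in>Kmat M - KCP M. xINV x \<omega> z t k =
          xINV x \<omega>' z (t - 1) k
          + (\<Sum>z'\<in>Zones M - {z}. xTRRM x \<omega> z' z t k - xTRRM x \<omega> z z' t k)
          + xRMINV x \<omega> z t k - xINVMC x \<omega> z t k) \<and>
      \<comment> \<open>(Inv4), cathode powders\<close>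
      (\<forall>k\<in>KCP M. xINV x \<omega> z t k =
          xINV x \<omega>' z (t - 1) k
          + (\<Sum>z'\<in>Zones M - {z}. xTRRM x \<omega> z' z t k - xTRRM x \<omega> z z' t k)
          + xRMINV x \<omega> z t k + xCPINV x \<omega> z t k - xINVNB x \<omega> z t k))"

definition cap_constraints ::
  "('i, 'j, 'k, 'z, 'w) model \<Rightarrow> ('z \<Rightarrow> nat \<Rightarrow> 'j \<Rightarrow> nat \<Rightarrow> real)
     \<Rightarrow> ('z \<Rightarrow> nat \<Rightarrow> 'k \<Rightarrow> nat \<Rightarrow> real) \<Rightarrow> ('i, 'j, 'k, 'z, 'w) opvars \<Rightarrow> bool" where
  "cap_constraints M yREC yCP x \<longleftrightarrow>
    \<comment> \<open>(Cap1)\<close>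
    (\<forall>j\<in>Jproc M. \<forall>l\<in>{1..Ln M}. \<forall>t\<in>Tl M l. \<forall>z\<in>Zones M. \<forall>\<omega>\<in>Om M (sig M t).
       (\<Sum>n\<in>{1..NREC M l}. yREC z l j n) \<ge> (\<Sum>i\<in>Ichem M. xRBRM x \<omega> z t i j)) \<and>
    \<comment> \<open>(Cap2)\<close>
    (\<forall>k\<in>KCP M. \<forall>l\<in>{1..Ln M}. \<forall>t\<in>Tl M l. \<forall>z\<in>Zones M. \<forall>\<omega>\<in>Om M (sig M t).
       (\<Sum>n\<in>{1..NCP M l k}. yCP z l k n) \<ge> xCPINV x \<omega> z t k) \<and>
    \<comment> \<open>(Cap3)\<close>
    (\<forall>z\<in>Zones M. \<forall>j\<in>Jproc M. \<forall>l\<in>{2..Ln M}.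
       (\<Sum>n\<in>{1..NREC M l}. yREC z l j n) \<ge> (\<Sum>n\<in>{1..NREC M (l - 1)}. yREC z (l - 1) j n)) \<and>
    \<comment> \<open>(Cap4)\<close>
    (\<forall>z\<in>Zones M. \<forall>k\<in>KCP M. \<forall>l\<in>{2..Ln M}.
       (\<Sum>n\<in>{1..NCP M l k}. yCP z l k n) \<ge> (\<Sum>n\<in>{1..NCP M (l - 1) k}. yCP z (l - 1) k n)) \<and>
    \<comment> \<open>(Cap5)\<close>
    (\<forall>z\<in>Zones M. \<forall>l\<in>{1..Ln M}. \<forall>j\<in>Jproc M. \<forall>n\<in>{1..NREC M l}. yREC z l j n \<le> uREC M) \<and>
    \<comment> \<open>(Cap6)\<close>
    (\<forall>z\<in>Zones M. \<forall>l\<in>{1..Ln M}. \<forall>k\<in>KCP M. \<forall>n\<in>{1..NCP M l k}. yCP z l k n \<le> uCP M)"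

end

theory Submission
  imports Defs
begin


primrec rbacc :: "('w \<Rightarrow> nat \<Rightarrow> 'w) \<Rightarrow> ('w \<Rightarrow> 'z \<Rightarrow> nat \<Rightarrow> 'i \<Rightarrow> real) \<Rightarrow> 'w \<Rightarrow> 'z \<Rightarrow> nat \<Rightarrow> 'i \<Rightarrow> real" where
  "rbacc a s w z 0 i = 0"
| "rbacc a s w z (Suc t) i = rbacc a s (a w t) z t i + max 0 (s w z (Suc t) i)"

lemma rbacc_nonneg: "rbacc a s w z t i \<ge> 0"
  by (induction t arbitrary: w) auto

theorem proposition1:
  fixes M :: "('i, 'j, 'k, 'z, 'w) model"
    and c :: "'c \<Rightarrow> real"        \<comment> \<open>cost coefficients\<close>
    and v :: "'v \<Rightarrow> real"        \<comment> \<open>values\<close>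
    and p :: "'w \<Rightarrow> real"        \<comment> \<open>scenario-node probabilities\<close>
    and \<gamma> :: real                 \<comment> \<open>discount factor\<close>
    and f :: "'f \<Rightarrow> real \<Rightarrow> real"  \<comment> \<open>facility cost functions\<close>
    and yREC :: "'z \<Rightarrow> nat \<Rightarrow> 'j \<Rightarrow> nat \<Rightarrow> real"
    and yCP :: "'z \<Rightarrow> nat \<Rightarrow> 'k \<Rightarrow> nat \<Rightarrow> real"
  assumes wf: "wf_model M"
    and d_nonneg: "\<forall>t\<in>{1..Tn M}. \<forall>\<omega>\<in>Om M (sig M t). \<forall>z\<in>Zones M. \<forall>i\<in>Ichem M. dem M \<omega> z t i \<ge> 0"
    and s_nonneg: "\<forall>t\<in>{1..Tn M}. \<forall>\<omega>\<in>Om M (sig M t). \<forall>z\<in>Zones M. \<forall>i\<in>Ichem M. supp M \<omega> z t i \<ge> 0"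
    and c_nonneg: "\<forall>e. c e \<ge> 0"
    and v_nonneg: "\<forall>e. v e \<ge> 0"
    and p_nonneg: "\<forall>\<omega>. p \<omega> \<ge> 0"
    and DNB_nonneg: "\<forall>i\<in>Ichem M. \<forall>k\<in>Kmat M. DNB M i k \<ge> 0"
    and DCP_nonneg: "\<forall>k'\<in>KCP M. \<forall>k\<in>Kmat M - KCP M. DCP M k' k \<ge> 0"
    and DMC_nonneg: "\<forall>k'\<in>Kmat M - KCP M. \<forall>k\<in>Kmat M - KCP M. DMC M k' k \<ge> 0"
    and DREC_nonneg: "\<forall>k\<in>Kmat M. \<forall>i\<in>Ichem M. \<forall>j\<in>Jproc M. DREC M k i j \<ge> 0"
    and uREC_pos: "uREC M > 0"
    and uCP_pos: "uCP M > 0"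
    and gamma: "0 \<le> \<gamma>" "\<gamma> < 1"
    and f_props: "\<forall>e. concave_on {0..} (f e) \<and> mono_on {0..} (f e) \<and> f e 0 = 0"
    and yREC_nonneg: "\<forall>z\<in>Zones M. \<forall>l\<in>{1..Ln M}. \<forall>j\<in>Jproc M. \<forall>n\<in>{1..NREC M l}. yREC z l j n \<ge> 0"
    and yCP_nonneg: "\<forall>z\<in>Zones M. \<forall>l\<in>{1..Ln M}. \<forall>k\<in>KCP M. \<forall>n\<in>{1..NCP M l k}. yCP z l k n \<ge> 0"
    and Cap3: "\<forall>z\<in>Zones M. \<forall>j\<in>Jproc M. \<forall>l\<in>{2..Ln M}.
       (\<Sum>n\<in>{1..NREC M l}. yREC z l j n) \<ge> (\<Sum>n\<in>{1..NREC M (l - 1)}. yREC z (l - 1) j n)"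
    and Cap4: "\<forall>z\<in>Zones M. \<forall>k\<in>KCP M. \<forall>l\<in>{2..Ln M}.
       (\<Sum>n\<in>{1..NCP M l k}. yCP z l k n) \<ge> (\<Sum>n\<in>{1..NCP M (l - 1) k}. yCP z (l - 1) k n)"
    and Cap5: "\<forall>z\<in>Zones M. \<forall>l\<in>{1..Ln M}. \<forall>j\<in>Jproc M. \<forall>n\<in>{1..NREC M l}. yREC z l j n \<le> uREC M"
    and Cap6: "\<forall>z\<in>Zones M. \<forall>l\<in>{1..Ln M}. \<forall>k\<in>KCP M. \<forall>n\<in>{1..NCP M l k}. yCP z l k n \<le> uCP M"
  shows "\<exists>x :: ('i, 'j, 'k, 'z, 'w) opvars.
           opvars_nonneg x \<and> prod_constraints M x \<and> inv_constraints M x \<and>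
           cap_constraints M yREC yCP x"
proof -
  define x :: "('i, 'j, 'k, 'z, 'w) opvars" where "x = \<lparr>
     xNMNB = (\<lambda>w z t k. max 0 (\<Sum>i\<in>Ichem M. DNB M i k * dem M w z t i)),
     xRMINV = (\<lambda>w z t k. 0), xRMS = (\<lambda>w z t k. 0), xINV = (\<lambda>w z t k. 0),
     xINVNB = (\<lambda>w z t k. 0), xCPINV = (\<lambda>w z t k. 0), xNMCP = (\<lambda>w z t k. 0),
     xMCCP = (\<lambda>w z t k. 0), xINVMC = (\<lambda>w z t k. 0),
     xRB = rbacc (anc M) (supp M),
     xRBRM = (\<lambda>w z t i j. 0), xTRRM = (\<lambda>w z z' t k. 0), xTRRB = (\<lambda>w z z' t i. 0) \<rparr>"
  have KCP: "KCP M \<subseteq> Kmat M" using wf unfolding wf_model_def by blast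
  have dsum: "(\<Sum>i\<in>Ichem M. DNB M i k * dem M w z t i) \<ge> 0"
    if "t\<in>{1..Tn M}" "w\<in>Om M (sig M t)" "z\<in>Zones M" "k\<in>Kmat M" for t w z k
    using that d_nonneg DNB_nonneg by (intro sum_nonneg) auto
  have "opvars_nonneg x" unfolding opvars_nonneg_def x_def by (simp add: rbacc_nonneg)
  moreover have "prod_constraints M x" unfolding prod_constraints_def x_def
    using dsum KCP by auto
  moreover have "inv_constraints M x"
  proof -
    have rb: "rbacc (anc M) (supp M) w z t i = rbacc (anc M) (supp M) (anc M w (t - 1)) z (t - 1) i + supp M w z t i"
      if t: "t\<in>{1..Tn M}" and z: "z\<in>Zones M" and w: "w\<in>Om M (sig M t)" and i: "i\<in>Ichem M" for t z w i
    proof -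
      obtain t' where t': "t = Suc t'" using t by (cases t) auto
      have "supp M w z t i \<ge> 0" using s_nonneg t z w i by blast
      then show ?thesis using t' by simp
    qed
    show ?thesis unfolding inv_constraints_def x_def Let_def using rb by simp
  qed
  moreover have "cap_constraints M yREC yCP x"
  proof -
    have r: "0 \<le> (\<Sum>n\<in>{1..NREC M l}. yREC z l j n)"
      if "j\<in>Jproc M" "l\<in>{1..Ln M}" "z\<in>Zones M" for j l z
      using that yREC_nonneg by (intro sum_nonneg) auto
    have c: "0 \<le> (\<Sum>n\<in>{1..NCP M l k}. yCP z l k n)"
      if "k\<in>KCP M" "l\<in>{1..Ln M}" "z\<in>Zones M" for k l z
      using that yCP_nonneg by (intro sum_nonneg) auto
    show ?thesis unfolding cap_constraints_def x_def using r c Cap3 Cap4 Cap5 Cap6 by simp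
  qed
  ultimately show ?thesis by blast
qed

end
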